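(* Let $v\in H^1$ and let $r\in AC[0,+\infty)$ satisfy $r(0)>0$ and $\underline{\theta}\le r^2\partial_xr\le\overline{\theta}$ (a.e.) for some constants $0<\underline\theta\le\overline\theta<+\infty$. Then $$\int_0^\infty(r^2\partial_xr)^{-1}\big(\partial_x(r^2v)\big)^2dx+2rv^2\big|_{x=0}=\int_0^\infty(r^2\partial_xr)^{-1}(r^2\partial_xv)^2dx+2\int_0^\infty(r^2\partial_xr)r^{-2}v^2dx,$$ and for every $x\ge0$, $$|v(x)|^2\le r(x)^{-2}\big(\|v\|_{L^2}^2+\|r^2\partial_xv\|_{L^2}^2\big),\qquad |v(x)|^2\le r(x)^{-2}\Big(\big(8r(0)^{-2}\overline\theta^2+1\big)\|v\|_{L^2}^2+2\|\partial_x(r^2v)\|_{L^2}^2\Big).$$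
   Context: $L^2=L^2(0,+\infty)$. With $\xi(x)=(1+3x)^{1/3}$, $H^1$ is the space of $v\in L^2(0,\infty)$ with $\xi^2\partial_xv\in L^2(0,\infty)$. *)

theory Defs
  imports "HOL-Analysis.Analysis"
begin

definition xi :: "real \<Rightarrow> real" where
  "xi x = (1 + 3 * x) powr (1/3)"

text \<open>f is (locally) absolutely continuous on [0,+infinity) with a.e. derivative f':
  f' is integrable on every [0,x] and f x = f 0 + integral of f' over [0,x].\<close>
definition ac_deriv_nonneg :: "(real \<Rightarrow> real) \<Rightarrow> (real \<Rightarrow> real) \<Rightarrow> bool" where
  "ac_deriv_nonneg f f' \<longleftrightarrow>
     (\<forall>x\<ge>0. set_integrable lborel {0..x} f' \<and> f x = f 0 + (LINT t:{0..x}|lborel. f' t))"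

text \<open>v (continuous representative) is in H^1 with weak derivative v':
  v in L^2(0,inf) and xi^2 v' in L^2(0,inf).\<close>
definition H1 :: "(real \<Rightarrow> real) \<Rightarrow> (real \<Rightarrow> real) \<Rightarrow> bool" where
  "H1 v v' \<longleftrightarrow> ac_deriv_nonneg v v'
     \<and> set_integrable lborel {0<..} (\<lambda>x. (v x)^2)
     \<and> set_integrable lborel {0<..} (\<lambda>x. (xi x ^ 2 * v' x)^2)"

end

theory Submission
  imports Defs
begin

lemma prod_integrable:
  fixes a b :: "real \<Rightarrow> real"
  assumes a: "integrable lborel a" and b: "integrable lborel b"
  shows "integrable (lborel \<Otimes>\<^sub>M lborel) (\<lambda>(t,s). a t * b s)"
proof (rule lborel_pair.Fubini_integrable)
  show "(\<lambda>(t,s). a t * b s) \<in> borel_measurable (lborel \<Otimes>\<^sub>M lborel)"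
    using a b by measurable
  show "integrable lborel (\<lambda>x. LINT y|lborel. norm (case (x, y) of (t, s) \<Rightarrow> a t * b s))"
    using a b by (simp add: abs_mult)
  show "AE x in lborel. integrable lborel (\<lambda>y. case (x, y) of (t, s) \<Rightarrow> a t * b s)"
    using b by simp
qed

lemma core:
  fixes f g :: "real \<Rightarrow> real"
  assumes f: "set_integrable lborel {0..x} f" and g: "set_integrable lborel {0..x} g"
  shows "set_integrable lborel {0..x} (\<lambda>t. f t * (LINT s:{0..t}|lborel. g s))"
    "(LINT t:{0..x}|lborel. f t * (LINT s:{0..t}|lborel. g s))
      + (LINT t:{0..x}|lborel. g t * (LINT s:{0..t}|lborel. f s))
      = (LINT t:{0..x}|lborel. f t) * (LINT t:{0..x}|lborel. g t)"
proof -
  define a where "a t = indicator {0..x} t * f t" for t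
  define b where "b t = indicator {0..x} t * g t" for t
  have ia: "integrable lborel a" using f unfolding a_def set_integrable_def by simp
  have ib: "integrable lborel b" using g unfolding b_def set_integrable_def by simp
  have [measurable]: "a \<in> borel_measurable lborel" "b \<in> borel_measurable lborel"
    using ia ib by auto
  have bm1[measurable]: "(\<lambda>p. b (snd p)) \<in> borel_measurable (lborel \<Otimes>\<^sub>M lborel)"
    by (rule measurable_compose[OF measurable_snd]) simp
  have bm2[measurable]: "(\<lambda>p. a (fst p)) \<in> borel_measurable (lborel \<Otimes>\<^sub>M lborel)"
    by (rule measurable_compose[OF measurable_fst]) simp
  have sm: "(\<lambda>p::real\<times>real. snd p) \<in> borel_measurable (lborel \<Otimes>\<^sub>M lborel)"
    "(\<lambda>p::real\<times>real. fst p) \<in> borel_measurable (lborel \<Otimes>\<^sub>M lborel)"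
    by (rule measurable_compose[OF measurable_snd], simp) (rule measurable_compose[OF measurable_fst], simp)
  have pm1[measurable]: "Measurable.pred (lborel \<Otimes>\<^sub>M lborel) (\<lambda>p::real\<times>real. snd p \<le> fst p)"
    "Measurable.pred (lborel \<Otimes>\<^sub>M lborel) (\<lambda>p::real\<times>real. fst p \<le> snd p)"
    unfolding Measurable.pred_def using borel_measurable_le[OF sm(1) sm(2)] borel_measurable_le[OF sm(2) sm(1)] by auto
  have i0: "integrable (lborel \<Otimes>\<^sub>M lborel) (\<lambda>(t,s). a t * b s)"
    by (rule prod_integrable[OF ia ib])
  define H1 where "H1 t s = a t * (indicator {..t} s * b s)" for t s
  define H2 where "H2 t s = a t * (indicator {t..} s * b s)" for t s
  have iH1: "integrable (lborel \<Otimes>\<^sub>M lborel) (\<lambda>(t,s). H1 t s)"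
  proof (rule Bochner_Integration.integrable_bound[OF i0])
    show "(\<lambda>(t,s). H1 t s) \<in> borel_measurable (lborel \<Otimes>\<^sub>M lborel)"
      unfolding H1_def indicator_def by (simp add: case_prod_beta) measurable
    show "AE p in lborel \<Otimes>\<^sub>M lborel. norm (case p of (t,s) \<Rightarrow> H1 t s) \<le> norm (case p of (t,s) \<Rightarrow> a t * b s)"
      by (auto simp: H1_def indicator_def abs_mult)
  qed
  have iH2: "integrable (lborel \<Otimes>\<^sub>M lborel) (\<lambda>(t,s). H2 t s)"
  proof (rule Bochner_Integration.integrable_bound[OF i0])
    show "(\<lambda>(t,s). H2 t s) \<in> borel_measurable (lborel \<Otimes>\<^sub>M lborel)"
      unfolding H2_def indicator_def by (simp add: case_prod_beta) measurable
    show "AE p in lborel \<Otimes>\<^sub>M lborel. norm (case p of (t,s) \<Rightarrow> H2 t s) \<le> norm (case p of (t,s) \<Rightarrow> a t * b s)"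
      by (auto simp: H2_def indicator_def abs_mult)
  qed
  have I1: "(LINT s|lborel. H1 t s) = indicator {0..x} t * (f t * (LINT s:{0..t}|lborel. g s))" for t
  proof (cases "t \<in> {0..x}")
    case True
    have "(LINT s|lborel. H1 t s) = a t * (LINT s|lborel. indicator {..t} s * b s)"
      unfolding H1_def by simp
    also have "(LINT s|lborel. indicator {..t} s * b s) = (LINT s:{0..t}|lborel. g s)"
      unfolding set_lebesgue_integral_def b_def
      by (rule Bochner_Integration.integral_cong) (use True in \<open>auto simp: indicator_def\<close>)
    finally show ?thesis using True by (simp add: a_def)
  next
    case False then show ?thesis by (simp add: H1_def a_def)
  qed
  have I2: "(LINT t|lborel. H2 t s) = indicator {0..x} s * (g s * (LINT t:{0..s}|lborel. f t))" for s
  proof (cases "s \<in> {0..x}")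
    case True
    have "(LINT t|lborel. H2 t s) = b s * (LINT t|lborel. indicator {..s} t * a t)"
      unfolding H2_def integral_mult_right_zero[symmetric]
      by (rule Bochner_Integration.integral_cong) (auto simp: indicator_def)
    also have "(LINT t|lborel. indicator {..s} t * a t) = (LINT t:{0..s}|lborel. f t)"
      unfolding set_lebesgue_integral_def a_def
      by (rule Bochner_Integration.integral_cong) (use True in \<open>auto simp: indicator_def\<close>)
    finally show ?thesis using True by (simp add: b_def)
  next
    case False then show ?thesis by (simp add: H2_def b_def)
  qed
  have fst1: "integrable lborel (\<lambda>t. LINT s|lborel. H1 t s)"
    using lborel_pair.integrable_fst[OF iH1] .
  then show "set_integrable lborel {0..x} (\<lambda>t. f t * (LINT s:{0..t}|lborel. g s))"
    unfolding set_integrable_def I1 by simp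
  have fst2: "integrable lborel (\<lambda>t. LINT s|lborel. H2 t s)"
    using lborel_pair.integrable_fst[OF iH2] .
  have sum: "(LINT s|lborel. H1 t s) + (LINT s|lborel. H2 t s) = a t * (LINT s|lborel. b s)" for t
  proof -
    have e: "(LINT s|lborel. indicator {t..} s * b s) = (LINT s|lborel. indicator {t<..} s * b s)"
      by (rule integral_cong_AE) (use AE_lborel_singleton[of t] in \<open>auto simp: indicator_def\<close>)
    have "(LINT s|lborel. H1 t s) + (LINT s|lborel. H2 t s)
        = a t * ((LINT s|lborel. indicator {..t} s * b s) + (LINT s|lborel. indicator {t<..} s * b s))"
      unfolding H1_def H2_def e[symmetric] by (simp add: distrib_left)
    also have "(LINT s|lborel. indicator {..t} s * b s) + (LINT s|lborel. indicator {t<..} s * b s)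
        = (LINT s|lborel. indicator {..t} s * b s + indicator {t<..} s * b s)"
      by (rule Bochner_Integration.integral_add[symmetric])
        (auto intro!: integrable_mult_indicator[OF _ ib, simplified])
    also have "(LINT s|lborel. indicator {..t} s * b s + indicator {t<..} s * b s) = (LINT s|lborel. b s)"
      by (rule Bochner_Integration.integral_cong) (auto simp: indicator_def)
    finally show ?thesis .
  qed
  have "(LINT t:{0..x}|lborel. f t * (LINT s:{0..t}|lborel. g s)) = (LINT t|lborel. LINT s|lborel. H1 t s)"
    unfolding set_lebesgue_integral_def I1 by simp
  moreover have "(LINT t:{0..x}|lborel. g t * (LINT s:{0..t}|lborel. f s)) = (LINT t|lborel. LINT s|lborel. H2 t s)"
  proof -
    have "(LINT t|lborel. LINT s|lborel. H2 t s) = (LINT s|lborel. LINT t|lborel. H2 t s)"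
      using lborel_pair.Fubini_integral[OF iH2] by simp
    also have "\<dots> = (LINT t:{0..x}|lborel. g t * (LINT s:{0..t}|lborel. f s))"
      unfolding set_lebesgue_integral_def I2 by simp
    finally show ?thesis by simp
  qed
  moreover have "(LINT t|lborel. LINT s|lborel. H1 t s) + (LINT t|lborel. LINT s|lborel. H2 t s)
      = (LINT t|lborel. a t * (LINT s|lborel. b s))"
    unfolding sum[symmetric] by (rule Bochner_Integration.integral_add[symmetric, OF fst1 fst2])
  moreover have "(LINT t|lborel. a t * (LINT s|lborel. b s)) = (LINT t:{0..x}|lborel. f t) * (LINT t:{0..x}|lborel. g t)"
    unfolding set_lebesgue_integral_def a_def b_def by simp
  ultimately show "(LINT t:{0..x}|lborel. f t * (LINT s:{0..t}|lborel. g s))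
      + (LINT t:{0..x}|lborel. g t * (LINT s:{0..t}|lborel. f s))
      = (LINT t:{0..x}|lborel. f t) * (LINT t:{0..x}|lborel. g t)" by simp
qed

lemma ac_prod:
  assumes u: "ac_deriv_nonneg u u'" and w: "ac_deriv_nonneg w w'"
  shows "ac_deriv_nonneg (\<lambda>x. u x * w x) (\<lambda>x. u' x * w x + u x * w' x)"
  unfolding ac_deriv_nonneg_def
proof (intro allI impI)
  fix x :: real assume x: "x \<ge> 0"
  define U where "U t = (LINT s:{0..t}|lborel. u' s)" for t
  define W where "W t = (LINT s:{0..t}|lborel. w' s)" for t
  have iu: "set_integrable lborel {0..x} u'" and iw: "set_integrable lborel {0..x} w'"
    using u w x unfolding ac_deriv_nonneg_def by blast+
  have ue: "u t = u 0 + U t" if "t \<in> {0..x}" for t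
    using u that unfolding ac_deriv_nonneg_def U_def atLeastAtMost_iff by blast
  have we: "w t = w 0 + W t" if "t \<in> {0..x}" for t
    using w that unfolding ac_deriv_nonneg_def W_def atLeastAtMost_iff by blast
  note c1 = core[OF iu iw] and c2 = core[OF iw iu]
  have e1: "set_integrable lborel {0..x} (\<lambda>t. u' t * w t) = set_integrable lborel {0..x} (\<lambda>t. w 0 * u' t + u' t * W t)"
    by (rule set_integrable_cong) (simp, simp, use we in \<open>auto simp: algebra_simps simp del: atLeastAtMost_iff\<close>)
  have i1: "set_integrable lborel {0..x} (\<lambda>t. u' t * w t)"
    unfolding e1 using iu c1(1) unfolding W_def by (intro set_integral_add) auto
  have e2: "set_integrable lborel {0..x} (\<lambda>t. u t * w' t) = set_integrable lborel {0..x} (\<lambda>t. u 0 * w' t + w' t * U t)"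
    by (rule set_integrable_cong) (simp, simp, use ue in \<open>auto simp: algebra_simps simp del: atLeastAtMost_iff\<close>)
  have i2: "set_integrable lborel {0..x} (\<lambda>t. u t * w' t)"
    unfolding e2 using iw c2(1) unfolding U_def by (intro set_integral_add) auto
  have v1: "(LINT t:{0..x}|lborel. u' t * w t) = w 0 * U x + (LINT t:{0..x}|lborel. u' t * W t)"
  proof -
    have "(LINT t:{0..x}|lborel. u' t * w t) = (LINT t:{0..x}|lborel. w 0 * u' t + u' t * W t)"
      by (rule set_lebesgue_integral_cong) (simp, use we in \<open>auto simp: algebra_simps simp del: atLeastAtMost_iff\<close>)
    also have "\<dots> = w 0 * U x + (LINT t:{0..x}|lborel. u' t * W t)"
      using iu c1(1) unfolding W_def U_def by (subst set_integral_add) auto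
    finally show ?thesis .
  qed
  have v2: "(LINT t:{0..x}|lborel. u t * w' t) = u 0 * W x + (LINT t:{0..x}|lborel. w' t * U t)"
  proof -
    have "(LINT t:{0..x}|lborel. u t * w' t) = (LINT t:{0..x}|lborel. u 0 * w' t + w' t * U t)"
      by (rule set_lebesgue_integral_cong) (simp, use ue in \<open>auto simp: algebra_simps simp del: atLeastAtMost_iff\<close>)
    also have "\<dots> = u 0 * W x + (LINT t:{0..x}|lborel. w' t * U t)"
      using iw c2(1) unfolding W_def U_def by (subst set_integral_add) auto
    finally show ?thesis .
  qed
  have "(LINT t:{0..x}|lborel. u' t * W t) + (LINT t:{0..x}|lborel. w' t * U t) = U x * W x"
    using c1(2) unfolding U_def W_def .
  then have "(LINT t:{0..x}|lborel. u' t * w t + u t * w' t) = w 0 * U x + u 0 * W x + U x * W x"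
    using v1 v2 i1 i2 by (subst set_integral_add) auto
  moreover have "u x * w x = u 0 * w 0 + (w 0 * U x + u 0 * W x + U x * W x)"
    using ue[of x] we[of x] x by (simp add: algebra_simps)
  ultimately show "set_integrable lborel {0..x} (\<lambda>x. u' x * w x + u x * w' x) \<and>
         u x * w x = u 0 * w 0 + (LINT t:{0..x}|lborel. u' t * w t + u t * w' t)"
    using i1 i2 by auto
qed

lemma ac_cong:
  assumes "ac_deriv_nonneg f f'" "\<And>x. 0 \<le> x \<Longrightarrow> g x = f x" "\<And>x. 0 \<le> x \<Longrightarrow> g' x = f' x"
  shows "ac_deriv_nonneg g g'"
  unfolding ac_deriv_nonneg_def
proof (intro allI impI)
  fix x :: real assume x: "0 \<le> x"
  have i: "set_integrable lborel {0..x} f'" and e: "f x = f 0 + (LINT t:{0..x}|lborel. f' t)"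
    using assms(1) x unfolding ac_deriv_nonneg_def by blast+
  have "set_integrable lborel {0..x} g' = set_integrable lborel {0..x} f'"
    by (rule set_integrable_cong) (auto simp: assms(3))
  moreover have "(LINT t:{0..x}|lborel. g' t) = (LINT t:{0..x}|lborel. f' t)"
    by (rule set_lebesgue_integral_cong) (auto simp: assms(3))
  ultimately show "set_integrable lborel {0..x} g' \<and> g x = g 0 + (LINT t:{0..x}|lborel. g' t)"
    using i e x assms(2)[of x] assms(2)[of 0] by simp
qed

lemma ac_cont:
  assumes "ac_deriv_nonneg f f'"
  shows "continuous_on {0..b} f"
proof (cases "b \<ge> 0")
  case False then show ?thesis by simp
next
  case True
  have "f' integrable_on {0..b}"
    using assms True unfolding ac_deriv_nonneg_def by (meson set_borel_integral_eq_integral(1))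
  then have c: "continuous_on {0..b} (\<lambda>x. f 0 + integral {0..x} f')"
    by (intro continuous_intros indefinite_integral_continuous_1)
  show ?thesis
  proof (rule continuous_on_cong[THEN iffD2, OF refl _ c])
    fix x assume "x \<in> {0..b}"
    then have x: "x \<ge> 0" by simp
    have i: "set_integrable lborel {0..x} f'" and e: "f x = f 0 + (LINT t:{0..x}|lborel. f' t)"
      using assms x unfolding ac_deriv_nonneg_def by blast+
    show "f x = f 0 + integral {0..x} f'"
      using e set_borel_integral_eq_integral(2)[OF i] by simp
  qed
qed

lemma meas_from_intervals:
  fixes f :: "real \<Rightarrow> real"
  assumes "\<And>n::nat. (\<lambda>x. indicator {0..real n} x * f x) \<in> borel_measurable lborel"
  shows "f \<in> borel_measurable (restrict_space lborel {0<..})"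
proof -
  have "(\<lambda>x. indicator {0..} x * f x) \<in> borel_measurable lborel"
  proof (rule borel_measurable_LIMSEQ_real[OF _ assms])
    fix x :: real
    obtain N :: nat where N: "x \<le> real N" using real_arch_simple by blast
    have "eventually (\<lambda>n. indicator {0..real n} x * f x = indicator {0..} x * f x) sequentially"
      unfolding eventually_sequentially
    proof (intro exI allI impI)
      fix n assume "n \<ge> N"
      then have "real N \<le> real n" by simp
      then have "x \<le> real n" using N by linarith
      then show "indicator {0..real n} x * f x = indicator {0..} x * f x"
        by (auto simp: indicator_def)
    qed
    then show "(\<lambda>n. indicator {0..real n} x * f x) \<longlonglongrightarrow> indicator {0..} x * f x"
      by (rule tendsto_eventually)
  qed
  then have "(\<lambda>x. indicator {0<..} x * (indicator {0..} x * f x)) \<in> borel_measurable lborel"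
    by measurable
  moreover have "(\<lambda>x. indicator {0<..} x * (indicator {0..} x * f x)) = (\<lambda>x. indicator {0<..} x *\<^sub>R f x)"
    by (auto simp: indicator_def fun_eq_iff)
  ultimately show ?thesis
    by (subst borel_measurable_restrict_space_iff) auto
qed

lemma ac_meas:
  assumes "ac_deriv_nonneg f f'"
  shows "f \<in> borel_measurable (restrict_space lborel {0<..})"
    "f' \<in> borel_measurable (restrict_space lborel {0<..})"
proof -
  show "f \<in> borel_measurable (restrict_space lborel {0<..})"
  proof (rule meas_from_intervals)
    fix n :: nat
    have "(\<lambda>x. indicator {0..real n} x *\<^sub>R f x) \<in> borel_measurable borel"
      by (rule borel_measurable_continuous_on_indicator) (auto intro: ac_cont[OF assms])
    then show "(\<lambda>x. indicator {0..real n} x * f x) \<in> borel_measurable lborel" by simp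
  qed
  show "f' \<in> borel_measurable (restrict_space lborel {0<..})"
  proof (rule meas_from_intervals)
    fix n :: nat
    have "set_integrable lborel {0..real n} f'" using assms unfolding ac_deriv_nonneg_def by simp
    then show "(\<lambda>x. indicator {0..real n} x * f' x) \<in> borel_measurable lborel" 
      unfolding set_integrable_def by (simp add: borel_measurable_integrable)
  qed
qed

lemma sbm:
  fixes f :: "real \<Rightarrow> real"
  assumes "f \<in> borel_measurable (restrict_space lborel {0<..})"
  shows "set_borel_measurable lborel {0<..} f"
  using assms unfolding set_borel_measurable_def by (subst (asm) borel_measurable_restrict_space_iff) auto

lemma int_bound:
  fixes f g :: "real \<Rightarrow> real"
  assumes "set_integrable lborel {0<..} f" "g \<in> borel_measurable (restrict_space lborel {0<..})"
    "AE x in lborel. 0 < x \<longrightarrow> \<bar>g x\<bar> \<le> f x"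
  shows "set_integrable lborel {0<..} g"
  by (rule set_integrable_bound[OF assms(1) sbm[OF assms(2)]]) (use assms(3) in \<open>auto elim!: eventually_mono\<close>)

lemma Ioi_Ici:
  fixes f :: "real \<Rightarrow> real"
  shows "set_integrable lborel {0<..} f \<longleftrightarrow> set_integrable lborel {0..} f"
    "(LINT x:{0<..}|lborel. f x) = (LINT x:{0..}|lborel. f x)"
  by (rule set_integrable_discrete_difference[where X="{0}"]; auto)
     (rule set_integral_discrete_difference[where X="{0}"]; auto)

lemma ac_lim:
  assumes "ac_deriv_nonneg f f'" "set_integrable lborel {0<..} f'"
  shows "(f \<longlongrightarrow> f 0 + (LINT x:{0<..}|lborel. f' x)) at_top"
proof -
  have "((\<lambda>b. LINT x:{0..b}|lborel. f' x) \<longlongrightarrow> (LINT x:{0..}|lborel. f' x)) at_top"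
    by (rule tendsto_set_lebesgue_integral_at_top) (use assms(2) Ioi_Ici in auto)
  then have "((\<lambda>b. f 0 + (LINT x:{0..b}|lborel. f' x)) \<longlongrightarrow> f 0 + (LINT x:{0<..}|lborel. f' x)) at_top"
    unfolding Ioi_Ici by (intro tendsto_intros)
  moreover have "eventually (\<lambda>b. f 0 + (LINT x:{0..b}|lborel. f' x) = f b) at_top"
    using assms(1) unfolding ac_deriv_nonneg_def eventually_at_top_linorder by (metis order_refl)
  ultimately show ?thesis by (rule Lim_transform_eventually)
qed

lemma pt1:
  fixes R R' r0 a b :: real
  assumes "0 < r0" "r0 \<le> R" "0 < a" "a \<le> R^2 * R'" "R^2 * R' \<le> b"
  shows "0 < R'" "R' \<le> b / r0^2" "0 \<le> R * R'" "R * R' \<le> b / r0"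
proof -
  have R: "R > 0" using assms by linarith
  show p: "0 < R'"
  proof (rule ccontr)
    assume "\<not> 0 < R'"
    then have "R^2 * R' \<le> 0" by (simp add: mult_nonneg_nonpos)
    then show False using assms by linarith
  qed
  have "r0^2 \<le> R^2" using assms by (intro power_mono) auto
  then have "r0^2 * R' \<le> R^2 * R'" using p by (intro mult_right_mono) auto
  then show "R' \<le> b / r0^2" using assms by (simp add: pos_le_divide_eq mult.commute)
  show "0 \<le> R * R'" using R p by simp
  have "r0 * (R * R') \<le> R * (R * R')" using assms R p by (intro mult_right_mono) auto
  also have "\<dots> = R^2 * R'" by (simp add: power2_eq_square)
  finally show "R * R' \<le> b / r0" using assms by (simp add: pos_le_divide_eq mult.commute)
qed

lemma pt2:
  fixes R r0 V V' :: real
  assumes "0 < r0" "r0 \<le> R"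
  shows "\<bar>R * V * V'\<bar> \<le> (V^2 + (R^2 * V')^2) / (2 * r0)"
proof -
  have R: "R > 0" using assms by linarith
  have a: "2 * \<bar>V\<bar> * \<bar>R^2 * V'\<bar> \<le> V^2 + (R^2 * V')^2"
    using sum_squares_bound[of "\<bar>V\<bar>" "\<bar>R^2 * V'\<bar>"] by (simp add: power2_abs)
  have "\<bar>R * V * V'\<bar> * (2 * R) = 2 * \<bar>V\<bar> * \<bar>R^2 * V'\<bar>"
    using R by (simp add: abs_mult power2_eq_square)
  also have "\<dots> \<le> V^2 + (R^2 * V')^2" by (rule a)
  finally have "\<bar>R * V * V'\<bar> \<le> (V^2 + (R^2 * V')^2) / (2 * R)"
    using R by (simp add: pos_le_divide_eq)
  also have "\<dots> \<le> (V^2 + (R^2 * V')^2) / (2 * r0)"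
    using assms by (intro divide_left_mono) auto
  finally show ?thesis .
qed

lemma pt2b:
  fixes R V V' :: real
  shows "\<bar>R^2 * V * V'\<bar> \<le> (V^2 + (R^2 * V')^2) / 2"
proof -
  have a: "2 * \<bar>V\<bar> * \<bar>R^2 * V'\<bar> \<le> V^2 + (R^2 * V')^2"
    using sum_squares_bound[of "\<bar>V\<bar>" "\<bar>R^2 * V'\<bar>"] by (simp add: power2_abs)
  then show ?thesis by (simp add: abs_mult mult_ac)
qed

lemma pt3:
  fixes c R R' V b :: real
  assumes "0 < c" "c \<le> R^2 * V^2" "0 < R'" "R^2 * R' \<le> b"
  shows "R' \<le> b / c * V^2"
proof -
  have "R' * c \<le> R' * (R^2 * V^2)" using assms by (intro mult_left_mono) auto
  also have "\<dots> = (R^2 * R') * V^2" by (simp add: mult_ac)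
  also have "\<dots> \<le> b * V^2" using assms by (intro mult_right_mono) auto
  finally show ?thesis using assms by (simp add: pos_le_divide_eq field_simps)
qed

lemma pt4:
  fixes R R' V V' :: real
  assumes "R^2 * R' \<noteq> 0"
  shows "(2 * R * R' * V + R^2 * V')^2 / (R^2 * R') = 4 * (R' * V^2) + 4 * (R * V * V') + (R^2 * V')^2 / (R^2 * R')"
  using assms by (simp add: field_simps power2_eq_square)

lemma pt5:
  fixes R R' V V' :: real
  assumes "0 \<le> R * R'"
  shows "- (2 * (R * R' * V^2) + 2 * (R^2 * V * V')) \<le> V^2 + (R^2 * V')^2"
proof -
  have "0 \<le> (V + R^2 * V')^2" by simp
  moreover have "0 \<le> R * R' * V^2" using assms by simp
  moreover have "(V + R^2 * V')^2 = V^2 + 2 * (R^2 * V * V') + (R^2 * V')^2"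
    by (simp add: power2_eq_square algebra_simps)
  ultimately show ?thesis by linarith
qed

lemma pt6:
  fixes a b V E W :: real
  assumes "0 \<le> a" "a \<le> b"
  shows "W^2 \<le> 8 * b^2 * V^2 + 2 * (2 * a * V + W)^2"
proof -
  have "a^2 \<le> b^2" using assms by (intro power_mono) auto
  then have "a^2 * V^2 \<le> b^2 * V^2" by (intro mult_right_mono) auto
  moreover have "0 \<le> (4 * a * V + W)^2" by simp
  moreover have "2 * (2 * a * V + W)^2 = (4 * a * V + W)^2 + W^2 - 8 * (a^2 * V^2)"
    by (simp add: power2_eq_square algebra_simps)
  ultimately show ?thesis by linarith
qed

lemma pt7:
  fixes R K x :: real
  assumes "0 < R" "R^3 \<le> K * (1 + 3*x)" "x \<ge> 0" "K > 0"
  shows "R^4 \<le> K powr (4/3) * ((1 + 3 * x) powr (1/3)) ^ 4"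
proof -
  have "R^4 = (R^3) powr (4/3)"
  proof -
    have "R^3 = R powr 3" using assms by (simp add: powr_realpow)
    then have "(R^3) powr (4/3) = R powr 4" by (simp add: powr_powr)
    also have "\<dots> = R^4" using assms by (simp add: powr_realpow)
    finally show ?thesis by simp
  qed
  also have "\<dots> \<le> (K * (1 + 3*x)) powr (4/3)"
    using assms by (intro powr_mono2) auto
  also have "\<dots> = K powr (4/3) * (1 + 3 * x) powr (4/3)"
    using assms by (simp add: powr_mult)
  also have "(1 + 3 * x) powr (4/3) = ((1 + 3 * x) powr (1/3)) ^ 4"
    using assms by (subst powr_power) (auto simp: field_simps)
  finally show ?thesis .
qed

lemma sub_le:
  fixes f :: "real \<Rightarrow> real"
  assumes "set_integrable lborel S f" "T \<in> sets lborel" "T \<subseteq> S" "AE x in lborel. x \<in> S \<longrightarrow> 0 \<le> f x"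
  shows "set_integrable lborel T f" "(LINT x:T|lborel. f x) \<le> (LINT x:S|lborel. f x)"
proof -
  show t: "set_integrable lborel T f" by (rule set_integrable_subset[OF assms(1-3)])
  show "(LINT x:T|lborel. f x) \<le> (LINT x:S|lborel. f x)"
    unfolding set_lebesgue_integral_def
    using t assms(1) unfolding set_integrable_def
    by (intro integral_mono_AE) (use assms(3,4) in \<open>auto elim!: eventually_mono simp: indicator_def\<close>)
qed

lemma cong_S:
  fixes f g :: "real \<Rightarrow> real"
  assumes "f \<in> borel_measurable (restrict_space lborel {0<..})" "g \<in> borel_measurable (restrict_space lborel {0<..})"
    "AE x in lborel. 0 < x \<longrightarrow> f x = g x"
  shows "(LINT x:{0<..}|lborel. f x) = (LINT x:{0<..}|lborel. g x)"
  unfolding set_lebesgue_integral_def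
  using sbm[OF assms(1)] sbm[OF assms(2)] unfolding set_borel_measurable_def
  by (intro integral_cong_AE) (use assms(3) in \<open>auto elim!: eventually_mono\<close>)

lemma split_int:
  fixes f :: "real \<Rightarrow> real"
  assumes "set_integrable lborel A f" "B \<in> sets lborel" "C \<in> sets lborel" "B \<inter> C = {}" "A = B \<union> C"
  shows "(LINT x:A|lborel. f x) = (LINT x:B|lborel. f x) + (LINT x:C|lborel. f x)"
  using assms set_integral_Un[of B C lborel f] set_integrable_subset[OF assms(1)] by auto

theorem lemma2p1:
  fixes v v' r r' :: "real \<Rightarrow> real" and theta_lo theta_hi :: real
  assumes hv: "H1 v v'"
    and hr: "ac_deriv_nonneg r r'"
    and hr0: "r 0 > 0"
    and hth: "0 < theta_lo" "theta_lo \<le> theta_hi"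
    and hbd: "AE x in lborel. 0 < x \<longrightarrow>
                theta_lo \<le> r x ^ 2 * r' x \<and> r x ^ 2 * r' x \<le> theta_hi"
  shows "((LINT x:{0<..}|lborel. (2 * r x * r' x * v x + r x ^ 2 * v' x)^2 / (r x ^ 2 * r' x))
           + 2 * r 0 * (v 0)^2
         = (LINT x:{0<..}|lborel. (r x ^ 2 * v' x)^2 / (r x ^ 2 * r' x))
           + 2 * (LINT x:{0<..}|lborel. (r x ^ 2 * r' x) / (r x ^ 2) * (v x)^2))
       \<and> (\<forall>x\<ge>0. (v x)^2 \<le> ((LINT y:{0<..}|lborel. (v y)^2)
                           + (LINT y:{0<..}|lborel. (r y ^ 2 * v' y)^2)) / (r x)^2)
       \<and> (\<forall>x\<ge>0. (v x)^2 \<le> ((8 / (r 0)^2 * theta_hi^2 + 1) * (LINT y:{0<..}|lborel. (v y)^2)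
             + 2 * (LINT y:{0<..}|lborel. (2 * r y * r' y * v y + r y ^ 2 * v' y)^2)) / (r x)^2)"
proof -
  have acv: "ac_deriv_nonneg v v'" and iv2: "set_integrable lborel {0<..} (\<lambda>x. (v x)^2)"
    and ixv: "set_integrable lborel {0<..} (\<lambda>x. (xi x ^ 2 * v' x)^2)"
    using hv unfolding H1_def by auto
  have [measurable]: "r \<in> borel_measurable (restrict_space lborel {0<..})"
    "r' \<in> borel_measurable (restrict_space lborel {0<..})"
    "v \<in> borel_measurable (restrict_space lborel {0<..})"
    "v' \<in> borel_measurable (restrict_space lborel {0<..})"
    using ac_meas[OF hr] ac_meas[OF acv] by auto
  have ac3: "ac_deriv_nonneg (\<lambda>x. r x ^ 3) (\<lambda>x. 3 * (r x ^ 2 * r' x))"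
    using ac_prod[OF ac_prod[OF hr hr] hr]
    by (rule ac_cong) (simp_all add: power3_eq_cube power2_eq_square algebra_simps)
  have i3: "set_integrable lborel {0..x} (\<lambda>t. r t ^ 2 * r' t)"
    and r3: "r x ^ 3 = r 0 ^ 3 + 3 * (LINT t:{0..x}|lborel. r t ^ 2 * r' t)" if "x \<ge> 0" for x
  proof -
    have a: "set_integrable lborel {0..x} (\<lambda>t. 3 * (r t ^ 2 * r' t))"
      and b: "r x ^ 3 = r 0 ^ 3 + (LINT t:{0..x}|lborel. 3 * (r t ^ 2 * r' t))"
      using ac3 that unfolding ac_deriv_nonneg_def by blast+
    show "set_integrable lborel {0..x} (\<lambda>t. r t ^ 2 * r' t)" using a by simp
    show "r x ^ 3 = r 0 ^ 3 + 3 * (LINT t:{0..x}|lborel. r t ^ 2 * r' t)" using b by simp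
  qed
  have r3b: "r 0 ^ 3 + 3 * theta_lo * x \<le> r x ^ 3 \<and> r x ^ 3 \<le> r 0 ^ 3 + 3 * theta_hi * x"
    if x: "x \<ge> 0" for x
  proof -
    have c: "set_integrable lborel {0..x} (\<lambda>t. c)" for c :: real
      by (rule borel_integrable_atLeastAtMost') simp
    have ic: "(LINT t:{0..x}|lborel. c) = x * c" for c :: real
      using x by (subst set_integral_const) auto
    have ae: "AE t in lborel. t \<in> {0..x} \<longrightarrow> theta_lo \<le> r t ^ 2 * r' t \<and> r t ^ 2 * r' t \<le> theta_hi"
      using hbd AE_lborel_singleton[of 0] by eventually_elim auto
    have "(LINT t:{0..x}|lborel. theta_lo) \<le> (LINT t:{0..x}|lborel. r t ^ 2 * r' t)"
      by (rule set_integral_mono_AE[OF c i3[OF x]]) (use ae in \<open>auto elim!: eventually_mono\<close>)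
    moreover have "(LINT t:{0..x}|lborel. r t ^ 2 * r' t) \<le> (LINT t:{0..x}|lborel. theta_hi)"
      by (rule set_integral_mono_AE[OF i3[OF x] c]) (use ae in \<open>auto elim!: eventually_mono\<close>)
    ultimately show ?thesis using r3[OF x] ic[of theta_lo] ic[of theta_hi] by (simp add: mult_ac)
  qed
  have rpos: "r 0 \<le> r x \<and> 0 < r x" if x: "x \<ge> 0" for x
  proof -
    have le: "r 0 ^ 3 \<le> r x ^ 3" using r3b[OF x] hth x by (smt (verit) mult_nonneg_nonneg)
    have p: "0 < r x"
    proof (rule ccontr)
      assume "\<not> 0 < r x"
      then have "r x * (r x)^2 \<le> 0" by (intro mult_nonpos_nonneg) auto
      then have "r x ^ 3 \<le> 0" by (simp add: power3_eq_cube power2_eq_square mult.assoc)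
      moreover have "0 < r 0 ^ 3" using hr0 by simp
      ultimately show False using le by linarith
    qed
    have "r 0 \<le> r x" using le p power_le_imp_le_base[of "r 0" 2 "r x"] by simp
    then show ?thesis using p by simp
  qed
  have aeS: "AE x in lborel. 0 < x \<longrightarrow> theta_lo \<le> r x ^ 2 * r' x \<and> r x ^ 2 * r' x \<le> theta_hi
      \<and> 0 < r' x \<and> r' x \<le> theta_hi / (r 0)^2 \<and> 0 \<le> r x * r' x \<and> r x * r' x \<le> theta_hi / r 0
      \<and> r 0 \<le> r x \<and> 0 < r x"
    using hbd
  proof eventually_elim
    case (elim x)
    show ?case
    proof
      assume x: "0 < x"
      then have b: "theta_lo \<le> r x ^ 2 * r' x" "r x ^ 2 * r' x \<le> theta_hi" using elim by auto
      have rp: "r 0 \<le> r x" "0 < r x" using rpos[of x] x by auto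
      show "theta_lo \<le> r x ^ 2 * r' x \<and> r x ^ 2 * r' x \<le> theta_hi
        \<and> 0 < r' x \<and> r' x \<le> theta_hi / (r 0)^2 \<and> 0 \<le> r x * r' x \<and> r x * r' x \<le> theta_hi / r 0
        \<and> r 0 \<le> r x \<and> 0 < r x"
        using pt1[OF hr0 rp(1) hth(1) b] b rp by auto
    qed
  qed
  define K where "K = max (r 0 ^ 3) theta_hi"
  have K: "K > 0" using hr0 hth unfolding K_def by (simp add: less_max_iff_disj)
  have iB: "set_integrable lborel {0<..} (\<lambda>x. (r x ^ 2 * v' x)^2)"
  proof (rule int_bound[of "\<lambda>x. K powr (4/3) * (xi x ^ 2 * v' x)^2"])
    show "set_integrable lborel {0<..} (\<lambda>x. K powr (4/3) * (xi x ^ 2 * v' x)^2)"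
      using ixv by simp
    show "(\<lambda>x. (r x ^ 2 * v' x)^2) \<in> borel_measurable (restrict_space lborel {0<..})"
      by measurable
    show "AE x in lborel. 0 < x \<longrightarrow> \<bar>(r x ^ 2 * v' x)^2\<bar> \<le> K powr (4/3) * (xi x ^ 2 * v' x)^2"
    proof (intro AE_I2 impI)
      fix x :: real assume x: "0 < x"
      have "r x ^ 3 \<le> K * (1 + 3 * x)"
      proof -
        have "r x ^ 3 \<le> r 0 ^ 3 + 3 * theta_hi * x" using r3b[of x] x by auto
        also have "\<dots> \<le> K + 3 * K * x" using x unfolding K_def
          by (intro add_mono mult_right_mono) auto
        finally show ?thesis by (simp add: algebra_simps)
      qed
      then have "r x ^ 4 \<le> K powr (4/3) * xi x ^ 4"
        unfolding xi_def using pt7[of "r x" K x] rpos[of x] x K by auto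
      then have "r x ^ 4 * (v' x)^2 \<le> K powr (4/3) * xi x ^ 4 * (v' x)^2"
        by (intro mult_right_mono) auto
      then show "\<bar>(r x ^ 2 * v' x)^2\<bar> \<le> K powr (4/3) * (xi x ^ 2 * v' x)^2"
      proof -
        have e1: "(r x ^ 2 * v' x)^2 = r x ^ 4 * (v' x)^2"
          by (simp add: power_mult_distrib flip: power_mult)
        have e2: "(xi x ^ 2 * v' x)^2 = xi x ^ 4 * (v' x)^2"
          by (simp add: power_mult_distrib flip: power_mult)
        show ?thesis unfolding e1 e2 using \<open>r x ^ 4 * (v' x)^2 \<le> K powr (4/3) * xi x ^ 4 * (v' x)^2\<close>
          by (simp add: mult_ac)
      qed
    qed
  qed
  have ip: "set_integrable lborel {0<..} (\<lambda>x. r' x * (v x)^2)"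
  proof (rule int_bound[of "\<lambda>x. theta_hi / (r 0)^2 * (v x)^2"])
    show "set_integrable lborel {0<..} (\<lambda>x. theta_hi / (r 0)^2 * (v x)^2)" using iv2 by simp
    show "(\<lambda>x. r' x * (v x)^2) \<in> borel_measurable (restrict_space lborel {0<..})" by measurable
    show "AE x in lborel. 0 < x \<longrightarrow> \<bar>r' x * (v x)^2\<bar> \<le> theta_hi / (r 0)^2 * (v x)^2"
      using aeS
    proof eventually_elim
      case (elim x)
      show ?case
      proof
        assume "0 < x"
        then have a: "0 < r' x" "r' x \<le> theta_hi / (r 0)^2" using elim by auto
        have "r' x * (v x)^2 \<le> theta_hi / (r 0)^2 * (v x)^2" using a by (intro mult_right_mono) auto
        then show "\<bar>r' x * (v x)^2\<bar> \<le> theta_hi / (r 0)^2 * (v x)^2" using a by (simp add: abs_mult)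
      qed
    qed
  qed
  have iq: "set_integrable lborel {0<..} (\<lambda>x. r x * r' x * (v x)^2)"
  proof (rule int_bound[of "\<lambda>x. theta_hi / r 0 * (v x)^2"])
    show "set_integrable lborel {0<..} (\<lambda>x. theta_hi / r 0 * (v x)^2)" using iv2 by simp
    show "(\<lambda>x. r x * r' x * (v x)^2) \<in> borel_measurable (restrict_space lborel {0<..})" by measurable
    show "AE x in lborel. 0 < x \<longrightarrow> \<bar>r x * r' x * (v x)^2\<bar> \<le> theta_hi / r 0 * (v x)^2"
      using aeS
    proof eventually_elim
      case (elim x)
      show ?case
      proof
        assume "0 < x"
        then have a: "0 \<le> r x * r' x" "r x * r' x \<le> theta_hi / r 0" using elim by auto
        have "r x * r' x * (v x)^2 \<le> theta_hi / r 0 * (v x)^2" using a by (intro mult_right_mono) auto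
        moreover have "\<bar>r x * r' x * (v x)^2\<bar> = r x * r' x * (v x)^2" using a by (intro abs_of_nonneg) auto
        ultimately show "\<bar>r x * r' x * (v x)^2\<bar> \<le> theta_hi / r 0 * (v x)^2" by simp
      qed
    qed
  qed
  have iAB: "set_integrable lborel {0<..} (\<lambda>x. (v x)^2 + (r x ^ 2 * v' x)^2)"
    using iv2 iB by (rule set_integral_add)
  have irvv: "set_integrable lborel {0<..} (\<lambda>x. r x * v x * v' x)"
  proof (rule int_bound[of "\<lambda>x. ((v x)^2 + (r x ^ 2 * v' x)^2) / (2 * r 0)"])
    show "set_integrable lborel {0<..} (\<lambda>x. ((v x)^2 + (r x ^ 2 * v' x)^2) / (2 * r 0))"
      using iAB by simp
    show "(\<lambda>x. r x * v x * v' x) \<in> borel_measurable (restrict_space lborel {0<..})" by measurable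
    show "AE x in lborel. 0 < x \<longrightarrow> \<bar>r x * v x * v' x\<bar> \<le> ((v x)^2 + (r x ^ 2 * v' x)^2) / (2 * r 0)"
      using aeS by eventually_elim (auto intro!: pt2 hr0)
  qed
  have irrvv: "set_integrable lborel {0<..} (\<lambda>x. r x ^ 2 * v x * v' x)"
  proof (rule int_bound[of "\<lambda>x. ((v x)^2 + (r x ^ 2 * v' x)^2) / 2"])
    show "set_integrable lborel {0<..} (\<lambda>x. ((v x)^2 + (r x ^ 2 * v' x)^2) / 2)"
      using iAB by simp
    show "(\<lambda>x. r x ^ 2 * v x * v' x) \<in> borel_measurable (restrict_space lborel {0<..})" by measurable
    show "AE x in lborel. 0 < x \<longrightarrow> \<bar>r x ^ 2 * v x * v' x\<bar> \<le> ((v x)^2 + (r x ^ 2 * v' x)^2) / 2"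
      by (intro AE_I2 impI pt2b)
  qed
  have iQ: "set_integrable lborel {0<..} (\<lambda>x. (r x ^ 2 * v' x)^2 / (r x ^ 2 * r' x))"
  proof (rule int_bound[of "\<lambda>x. (r x ^ 2 * v' x)^2 / theta_lo"])
    show "set_integrable lborel {0<..} (\<lambda>x. (r x ^ 2 * v' x)^2 / theta_lo)" using iB by simp
    show "(\<lambda>x. (r x ^ 2 * v' x)^2 / (r x ^ 2 * r' x)) \<in> borel_measurable (restrict_space lborel {0<..})"
      by measurable
    show "AE x in lborel. 0 < x \<longrightarrow> \<bar>(r x ^ 2 * v' x)^2 / (r x ^ 2 * r' x)\<bar> \<le> (r x ^ 2 * v' x)^2 / theta_lo"
      using aeS
    proof eventually_elim
      case (elim x)
      show ?case
      proof
        assume "0 < x"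
        then have a: "theta_lo \<le> r x ^ 2 * r' x" using elim by auto
        then have "\<bar>(r x ^ 2 * v' x)^2 / (r x ^ 2 * r' x)\<bar> = (r x ^ 2 * v' x)^2 / (r x ^ 2 * r' x)"
          using hth by simp
        also have "\<dots> \<le> (r x ^ 2 * v' x)^2 / theta_lo"
          using a hth by (intro divide_left_mono) auto
        finally show "\<bar>(r x ^ 2 * v' x)^2 / (r x ^ 2 * r' x)\<bar> \<le> (r x ^ 2 * v' x)^2 / theta_lo" .
      qed
    qed
  qed
  have iE: "set_integrable lborel {0<..} (\<lambda>x. (2 * r x * r' x * v x + r x ^ 2 * v' x)^2)"
  proof (rule int_bound[of "\<lambda>x. 8 * (theta_hi / r 0)^2 * (v x)^2 + 2 * (r x ^ 2 * v' x)^2"])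
    show "set_integrable lborel {0<..} (\<lambda>x. 8 * (theta_hi / r 0)^2 * (v x)^2 + 2 * (r x ^ 2 * v' x)^2)"
      using iv2 iB by (intro set_integral_add) auto
    show "(\<lambda>x. (2 * r x * r' x * v x + r x ^ 2 * v' x)^2) \<in> borel_measurable (restrict_space lborel {0<..})"
      by measurable
    show "AE x in lborel. 0 < x \<longrightarrow> \<bar>(2 * r x * r' x * v x + r x ^ 2 * v' x)^2\<bar> \<le> 8 * (theta_hi / r 0)^2 * (v x)^2 + 2 * (r x ^ 2 * v' x)^2"
      using aeS
    proof eventually_elim
      case (elim x)
      show ?case
      proof
        assume "0 < x"
        then have a: "0 \<le> r x * r' x" "r x * r' x \<le> theta_hi / r 0" using elim by auto
        have "(r x * r' x)^2 \<le> (theta_hi / r 0)^2" using a by (intro power_mono) auto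
        then have "(r x * r' x)^2 * (v x)^2 \<le> (theta_hi / r 0)^2 * (v x)^2" by (intro mult_right_mono) auto
        moreover have "(2 * r x * r' x * v x + r x ^ 2 * v' x)^2 \<le> 2 * (2 * r x * r' x * v x)^2 + 2 * (r x ^ 2 * v' x)^2"
          using sum_squares_bound[of "2 * r x * r' x * v x" "r x ^ 2 * v' x"]
          by (simp add: power2_eq_square algebra_simps)
        moreover have "(2 * r x * r' x * v x)^2 = 4 * ((r x * r' x)^2 * (v x)^2)"
          by (simp add: power2_eq_square algebra_simps)
        ultimately show "\<bar>(2 * r x * r' x * v x + r x ^ 2 * v' x)^2\<bar> \<le> 8 * (theta_hi / r 0)^2 * (v x)^2 + 2 * (r x ^ 2 * v' x)^2"
          by simp
      qed
    qed
  qed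
  have acvv: "ac_deriv_nonneg (\<lambda>x. v x * v x) (\<lambda>x. v' x * v x + v x * v' x)"
    by (rule ac_prod[OF acv acv])
  have acrr: "ac_deriv_nonneg (\<lambda>x. r x * r x) (\<lambda>x. r' x * r x + r x * r' x)"
    by (rule ac_prod[OF hr hr])
  have ac1: "ac_deriv_nonneg (\<lambda>x. r x * (v x)^2) (\<lambda>x. r' x * (v x)^2 + 2 * (r x * v x * v' x))"
    using ac_prod[OF hr acvv] by (rule ac_cong) (simp_all add: power2_eq_square algebra_simps)
  have ac2: "ac_deriv_nonneg (\<lambda>x. (r x)^2 * (v x)^2)
      (\<lambda>x. 2 * (r x * r' x * (v x)^2) + 2 * (r x ^ 2 * v x * v' x))"
    using ac_prod[OF acrr acvv] by (rule ac_cong) (simp_all add: power2_eq_square algebra_simps)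
  have id1: "set_integrable lborel {0<..} (\<lambda>x. r' x * (v x)^2 + 2 * (r x * v x * v' x))"
    using ip irvv by (intro set_integral_add) auto
  have id2: "set_integrable lborel {0<..} (\<lambda>x. 2 * (r x * r' x * (v x)^2) + 2 * (r x ^ 2 * v x * v' x))"
    using iq irrvv by (intro set_integral_add) auto
  define L1 where "L1 = r 0 * (v 0)^2 + (LINT x:{0<..}|lborel. r' x * (v x)^2 + 2 * (r x * v x * v' x))"
  define L2 where "L2 = (r 0)^2 * (v 0)^2 + (LINT x:{0<..}|lborel. 2 * (r x * r' x * (v x)^2) + 2 * (r x ^ 2 * v x * v' x))"
  have lim1: "((\<lambda>x. r x * (v x)^2) \<longlongrightarrow> L1) at_top"
    unfolding L1_def using ac_lim[OF ac1 id1] by simp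
  have lim2: "((\<lambda>x. (r x)^2 * (v x)^2) \<longlongrightarrow> L2) at_top"
    unfolding L2_def using ac_lim[OF ac2 id2] by simp
  have NB: False if c: "c > 0" and N: "N \<ge> 0" and hN: "\<And>x. x \<ge> N \<Longrightarrow> c \<le> (r x)^2 * (v x)^2" for c N
  proof -
    define M where "M = r 0 + (LINT t:{0..N}|lborel. r' t) + theta_hi / c * (LINT t:{0<..}|lborel. (v t)^2)"
    have rb: "r X \<le> M" if X: "X \<ge> N" for X
    proof -
      have X0: "X \<ge> 0" using X N by linarith
      have iX: "set_integrable lborel {0..X} r'" and eX: "r X = r 0 + (LINT t:{0..X}|lborel. r' t)"
        using hr X0 unfolding ac_deriv_nonneg_def by blast+
      have sp: "(LINT t:{0..X}|lborel. r' t) = (LINT t:{0..N}|lborel. r' t) + (LINT t:{N<..X}|lborel. r' t)"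
        by (rule split_int[OF iX]) (use X N in auto)
      have iNX: "set_integrable lborel {N<..X} r'"
        by (rule set_integrable_subset[OF iX]) (use N in auto)
      have iv2': "set_integrable lborel {N<..X} (\<lambda>t. (v t)^2)"
        by (rule sub_le(1)[OF iv2]) (use N in auto)
      have "(LINT t:{N<..X}|lborel. r' t) \<le> (LINT t:{N<..X}|lborel. theta_hi / c * (v t)^2)"
      proof (rule set_integral_mono_AE[OF iNX])
        show "set_integrable lborel {N<..X} (\<lambda>t. theta_hi / c * (v t)^2)" using iv2' by simp
        show "AE t\<in>{N<..X} in lborel. r' t \<le> theta_hi / c * (v t)^2"
          using aeS
        proof eventually_elim
          case (elim t)
          show ?case
          proof
            assume t: "t \<in> {N<..X}"
            then have "0 < t" using N by auto
            then have a: "0 < r' t" "(r t)^2 * r' t \<le> theta_hi" using elim by auto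
            show "r' t \<le> theta_hi / c * (v t)^2"
              by (rule pt3[OF c hN a]) (use t in auto)
          qed
        qed
      qed
      also have "\<dots> = theta_hi / c * (LINT t:{N<..X}|lborel. (v t)^2)" by simp
      also have "\<dots> \<le> theta_hi / c * (LINT t:{0<..}|lborel. (v t)^2)"
        using hth c by (intro mult_left_mono sub_le(2)[OF iv2]) (use N in auto)
      finally show ?thesis unfolding M_def eX sp by linarith
    qed
    define X where "X = max N (M^3 / (3 * theta_lo)) + 1"
    have X: "X \<ge> N" "X \<ge> 0" "X > M^3 / (3 * theta_lo)" unfolding X_def using N by auto
    have "r X ^ 3 \<le> M ^ 3" using rb[OF X(1)] rpos[OF X(2)] by (intro power_mono) auto
    moreover have "r 0 ^ 3 + 3 * theta_lo * X \<le> r X ^ 3" using r3b[OF X(2)] by auto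
    moreover have "M^3 < 3 * theta_lo * X" using X(3) hth by (simp add: pos_divide_less_eq mult.commute)
    moreover have "0 < r 0 ^ 3" using hr0 by simp
    ultimately show False by linarith
  qed
  have L2z: "L2 = 0"
  proof -
    have "L2 \<ge> 0" by (rule tendsto_lowerbound[OF lim2]) auto
    moreover have "\<not> L2 > 0"
    proof
      assume L: "L2 > 0"
      have "eventually (\<lambda>x. L2 / 2 < (r x)^2 * (v x)^2) at_top"
        by (rule order_tendstoD(1)[OF lim2]) (use L in auto)
      then obtain N where hN: "\<And>x. x \<ge> N \<Longrightarrow> L2 / 2 < (r x)^2 * (v x)^2"
        unfolding eventually_at_top_linorder by blast
      show False by (rule NB[of "L2/2" "max N 0"]) (use L hN in \<open>auto intro: less_imp_le\<close>)
    qed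
    ultimately show ?thesis by linarith
  qed
  have L1z: "L1 = 0"
  proof -
    have ev: "eventually (\<lambda>x. 0 \<le> r x * (v x)^2) at_top"
      unfolding eventually_at_top_linorder
    proof (intro exI[of _ 0] allI impI)
      fix x :: real assume "0 \<le> x"
      then have "0 < r x" using rpos by auto
      then show "0 \<le> r x * (v x)^2" by simp
    qed
    have "L1 \<ge> 0"
      by (rule tendsto_lowerbound[OF lim1 ev]) simp
    moreover have "\<not> L1 > 0"
    proof
      assume L: "L1 > 0"
      have "eventually (\<lambda>x. L1 / 2 < r x * (v x)^2) at_top"
        by (rule order_tendstoD(1)[OF lim1]) (use L in auto)
      then obtain N where hN: "\<And>x. x \<ge> N \<Longrightarrow> L1 / 2 < r x * (v x)^2"
        unfolding eventually_at_top_linorder by blast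
      have "r 0 * (L1 / 2) \<le> (r x)^2 * (v x)^2" if "x \<ge> max N 0" for x
      proof -
        have a: "r 0 \<le> r x" "0 < r x" using rpos[of x] that by auto
        have "r 0 * (L1 / 2) \<le> r x * (r x * (v x)^2)"
          using hN[of x] that a hr0 L by (intro mult_mono) auto
        then show ?thesis by (simp add: power2_eq_square mult_ac)
      qed
      then show False by (intro NB[of "r 0 * (L1/2)" "max N 0"]) (use L hr0 in auto)
    qed
    ultimately show ?thesis by linarith
  qed
  define P where "P = (LINT x:{0<..}|lborel. r' x * (v x)^2)"
  define R where "R = (LINT x:{0<..}|lborel. r x * v x * v' x)"
  define Q where "Q = (LINT x:{0<..}|lborel. (r x ^ 2 * v' x)^2 / (r x ^ 2 * r' x))"
  define A where "A = (LINT x:{0<..}|lborel. (v x)^2)"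
  define B where "B = (LINT x:{0<..}|lborel. (r x ^ 2 * v' x)^2)"
  define D where "D = (LINT x:{0<..}|lborel. (2 * r x * r' x * v x + r x ^ 2 * v' x)^2)"
  have claim1: "(LINT x:{0<..}|lborel. (2 * r x * r' x * v x + r x ^ 2 * v' x)^2 / (r x ^ 2 * r' x))
           + 2 * r 0 * (v 0)^2
         = (LINT x:{0<..}|lborel. (r x ^ 2 * v' x)^2 / (r x ^ 2 * r' x))
           + 2 * (LINT x:{0<..}|lborel. (r x ^ 2 * r' x) / (r x ^ 2) * (v x)^2)"
  proof -
    have e1: "r 0 * (v 0)^2 + P + 2 * R = 0"
      using L1z unfolding L1_def P_def R_def using ip irvv by (subst (asm) set_integral_add(2)) auto
    have "(LINT x:{0<..}|lborel. (2 * r x * r' x * v x + r x ^ 2 * v' x)^2 / (r x ^ 2 * r' x))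
        = (LINT x:{0<..}|lborel. 4 * (r' x * (v x)^2) + 4 * (r x * v x * v' x) + (r x ^ 2 * v' x)^2 / (r x ^ 2 * r' x))"
    proof (rule cong_S)
      show "(\<lambda>x. (2 * r x * r' x * v x + r x ^ 2 * v' x)^2 / (r x ^ 2 * r' x)) \<in> borel_measurable (restrict_space lborel {0<..})"
        by measurable
      show "(\<lambda>x. 4 * (r' x * (v x)^2) + 4 * (r x * v x * v' x) + (r x ^ 2 * v' x)^2 / (r x ^ 2 * r' x)) \<in> borel_measurable (restrict_space lborel {0<..})"
        by measurable
      show "AE x in lborel. 0 < x \<longrightarrow> (2 * r x * r' x * v x + r x ^ 2 * v' x)^2 / (r x ^ 2 * r' x)
          = 4 * (r' x * (v x)^2) + 4 * (r x * v x * v' x) + (r x ^ 2 * v' x)^2 / (r x ^ 2 * r' x)"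
        using aeS
      proof eventually_elim
        case (elim x)
        show ?case
        proof
          assume "0 < x"
          then have "theta_lo \<le> r x ^ 2 * r' x" using elim by auto
          then have "r x ^ 2 * r' x \<noteq> 0" using hth by auto
          then show "(2 * r x * r' x * v x + r x ^ 2 * v' x)^2 / (r x ^ 2 * r' x)
            = 4 * (r' x * (v x)^2) + 4 * (r x * v x * v' x) + (r x ^ 2 * v' x)^2 / (r x ^ 2 * r' x)"
            by (rule pt4)
        qed
      qed
    qed
    also have "\<dots> = 4 * P + 4 * R + Q"
      unfolding P_def R_def Q_def using ip irvv iQ
      by (subst set_integral_add(2), force, force, subst set_integral_add(2)) auto
    finally have l: "(LINT x:{0<..}|lborel. (2 * r x * r' x * v x + r x ^ 2 * v' x)^2 / (r x ^ 2 * r' x)) = 4 * P + 4 * R + Q" .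
    have r: "(LINT x:{0<..}|lborel. (r x ^ 2 * r' x) / (r x ^ 2) * (v x)^2) = P"
      unfolding P_def
    proof (rule set_lebesgue_integral_cong)
      show "\<forall>x. x \<in> {0<..} \<longrightarrow> r x ^ 2 * r' x / r x ^ 2 * (v x)^2 = r' x * (v x)^2"
      proof (intro allI impI)
        fix x :: real assume "x \<in> {0<..}"
        then have "0 < r x" using rpos[of x] by auto
        then show "r x ^ 2 * r' x / r x ^ 2 * (v x)^2 = r' x * (v x)^2" by simp
      qed
    qed simp
    show ?thesis unfolding l r Q_def[symmetric] using e1 by linarith
  qed
  have claim2: "(r x)^2 * (v x)^2 \<le> A + B" if x: "x \<ge> 0" for x
  proof -
    define d2 where "d2 t = 2 * (r t * r' t * (v t)^2) + 2 * (r t ^ 2 * v t * v' t)" for t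
    have id2': "set_integrable lborel {0..} d2" using id2 Ioi_Ici(1) unfolding d2_def by blast
    have ex: "(r x)^2 * (v x)^2 = (r 0)^2 * (v 0)^2 + (LINT t:{0..x}|lborel. d2 t)"
      using ac2 x unfolding ac_deriv_nonneg_def d2_def by blast
    have z: "(r 0)^2 * (v 0)^2 + (LINT t:{0..}|lborel. d2 t) = 0"
      using L2z unfolding L2_def d2_def Ioi_Ici(2) .
    have sp: "(LINT t:{0..}|lborel. d2 t) = (LINT t:{0..x}|lborel. d2 t) + (LINT t:{x<..}|lborel. d2 t)"
      by (rule split_int[OF id2']) (use x in auto)
    have ix: "set_integrable lborel {x<..} d2"
      by (rule set_integrable_subset[OF id2']) (use x in auto)
    have iABx: "set_integrable lborel {x<..} (\<lambda>t. (v t)^2 + (r t ^ 2 * v' t)^2)"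
      by (rule sub_le(1)[OF iAB]) (use x in auto)
    have "(r x)^2 * (v x)^2 = - (LINT t:{x<..}|lborel. d2 t)" using ex z sp by linarith
    also have "\<dots> = (LINT t:{x<..}|lborel. - d2 t)" by (simp add: set_integral_uminus[OF ix])
    also have "\<dots> \<le> (LINT t:{x<..}|lborel. (v t)^2 + (r t ^ 2 * v' t)^2)"
    proof (rule set_integral_mono_AE)
      show "set_integrable lborel {x<..} (\<lambda>t. - d2 t)" using ix by (simp add: set_integrable_def)
      show "set_integrable lborel {x<..} (\<lambda>t. (v t)^2 + (r t ^ 2 * v' t)^2)" by (rule iABx)
      show "AE t\<in>{x<..} in lborel. - d2 t \<le> (v t)^2 + (r t ^ 2 * v' t)^2"
        using aeS
      proof eventually_elim
        case (elim t)
        show ?case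
        proof
          assume "t \<in> {x<..}"
          then have "0 < t" using x by auto
          then have "0 \<le> r t * r' t" using elim by auto
          then show "- d2 t \<le> (v t)^2 + (r t ^ 2 * v' t)^2" unfolding d2_def by (rule pt5)
        qed
      qed
    qed
    also have "\<dots> \<le> (LINT t:{0<..}|lborel. (v t)^2 + (r t ^ 2 * v' t)^2)"
      by (rule sub_le(2)[OF iAB]) (use x in auto)
    also have "\<dots> = A + B" unfolding A_def B_def using iv2 iB by (rule set_integral_add(2))
    finally show ?thesis .
  qed
  have BD: "A + B \<le> (8 / (r 0)^2 * theta_hi^2 + 1) * A + 2 * D"
  proof -
    have "B \<le> (LINT x:{0<..}|lborel. 8 * (theta_hi / r 0)^2 * (v x)^2 + 2 * (2 * r x * r' x * v x + r x ^ 2 * v' x)^2)"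
      unfolding B_def
    proof (rule set_integral_mono_AE[OF iB])
      show "set_integrable lborel {0<..} (\<lambda>x. 8 * (theta_hi / r 0)^2 * (v x)^2 + 2 * (2 * r x * r' x * v x + r x ^ 2 * v' x)^2)"
        using iv2 iE by (intro set_integral_add) auto
      show "AE x\<in>{0<..} in lborel. (r x ^ 2 * v' x)^2 \<le> 8 * (theta_hi / r 0)^2 * (v x)^2 + 2 * (2 * r x * r' x * v x + r x ^ 2 * v' x)^2"
        using aeS
      proof eventually_elim
        case (elim x)
        show ?case
        proof
          assume "x \<in> {0<..}"
          then have a: "0 \<le> r x * r' x" "r x * r' x \<le> theta_hi / r 0" using elim by auto
          have "(r x ^ 2 * v' x)^2 \<le> 8 * (theta_hi / r 0)^2 * (v x)^2 + 2 * (2 * (r x * r' x) * v x + r x ^ 2 * v' x)^2"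
            by (rule pt6[OF a])
          then show "(r x ^ 2 * v' x)^2 \<le> 8 * (theta_hi / r 0)^2 * (v x)^2 + 2 * (2 * r x * r' x * v x + r x ^ 2 * v' x)^2"
            by (simp add: mult.assoc)
        qed
      qed
    qed
    also have "\<dots> = 8 * (theta_hi / r 0)^2 * A + 2 * D"
      unfolding A_def D_def using iv2 iE by (subst set_integral_add(2)) auto
    finally have "B \<le> 8 * (theta_hi / r 0)^2 * A + 2 * D" .
    moreover have "8 * (theta_hi / r 0)^2 = 8 / (r 0)^2 * theta_hi^2" by (simp add: power_divide)
    ultimately show ?thesis by (simp add: algebra_simps)
  qed
  show ?thesis
  proof (intro conjI allI impI)
    show "(LINT x:{0<..}|lborel. (2 * r x * r' x * v x + r x ^ 2 * v' x)^2 / (r x ^ 2 * r' x))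
           + 2 * r 0 * (v 0)^2
         = (LINT x:{0<..}|lborel. (r x ^ 2 * v' x)^2 / (r x ^ 2 * r' x))
           + 2 * (LINT x:{0<..}|lborel. (r x ^ 2 * r' x) / (r x ^ 2) * (v x)^2)" by (rule claim1)
  next
    fix x :: real assume x: "0 \<le> x"
    have p: "0 < (r x)^2" using rpos[OF x] by simp
    show "(v x)^2 \<le> ((LINT y:{0<..}|lborel. (v y)^2) + (LINT y:{0<..}|lborel. (r y ^ 2 * v' y)^2)) / (r x)^2"
      using claim2[OF x] p unfolding A_def[symmetric] B_def[symmetric] by (simp add: pos_le_divide_eq mult.commute)
  next
    fix x :: real assume x: "0 \<le> x"
    have p: "0 < (r x)^2" using rpos[OF x] by simp
    have "(v x)^2 * (r x)^2 \<le> (8 / (r 0)^2 * theta_hi^2 + 1) * A + 2 * D"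
      using claim2[OF x] BD by (simp add: mult.commute)
    then show "(v x)^2 \<le> ((8 / (r 0)^2 * theta_hi^2 + 1) * (LINT y:{0<..}|lborel. (v y)^2)
             + 2 * (LINT y:{0<..}|lborel. (2 * r y * r' y * v y + r y ^ 2 * v' y)^2)) / (r x)^2"
      using p unfolding A_def[symmetric] D_def[symmetric] by (simp add: pos_le_divide_eq)
  qed
qed

end
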